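(* Let $L$ be a lattice. The following are equivalent: (1) $\exists$ has an $\omega$-strategy in the $(m,k)$-game on $L$ with starting position $(\{a\},\{b\})$ for all $a,b\in L$ with $a\not\leq b$ and for all $3\leq m,k\leq\omega$; (2) $\exists$ has a $5$-strategy in the $(3,3)$-game on $L$ with starting position $(\{a\},\{b\})$ for all $a,b\in L$ with $a\not\leq b$; (3) $L$ is distributive.
   Context: Work in ZFC. For a poset $P$, $2\leq\alpha,\beta\leq\omega$ and $U_0,V\subseteq P$, the $(\alpha,\beta)$-game with starting position $(U_0,V)$ is played between $\forall$ and $\exists$ in rounds $0,1,2,\ldots$; a set $U$ is maintained, initially $U_0$, with $V$ fixed. Each round $\forall$ moves and $\exists$ responds: (1) if $b\geq a$ for some $a\in U$, $\forall$ may play $(b)$ and $\exists$ must add $b$ to $U$; (2) if $A\subseteq U$ with $|A|<\alpha$ and $\bigwedge A$ exists in $P$, $\forall$ may play $A$ and $\exists$ must add $\bigwedge A$ to $U$; (3) if $B\subseteq P$ with $|B|<\beta$ and $\bigvee B$ exists in $P$ and lies in $U$, $\forall$ may play $B$ and $\exists$ must choose some $b\in B$ and add it to $U$. $\forall$ wins in round $n$ if $U\cap V\neq\emptyset$ at the beginning of round $n$. $\exists$ has an $n$-strategy if she can guarantee that $\forall$ does not win until at least round $n+1$, and an $\omega$-strategy if she can guarantee that $\forall$ never wins. *)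

theory Defs
  imports Main "HOL-Library.Extended_Nat"
begin

text \<open>The poset P is the carrier (UNIV) of a type of class order.
  Cardinal bounds alpha, beta with 2 \<le> alpha, beta \<le> omega are elements of enat,
  omega being \<infinity>; |A| < alpha means: A finite and card A < alpha.\<close>

definition is_meet :: "'a::order set \<Rightarrow> 'a \<Rightarrow> bool" where
  "is_meet A m \<longleftrightarrow> (\<forall>a\<in>A. m \<le> a) \<and> (\<forall>x. (\<forall>a\<in>A. x \<le> a) \<longrightarrow> x \<le> m)"

definition is_join :: "'a::order set \<Rightarrow> 'a \<Rightarrow> bool" where
  "is_join B s \<longleftrightarrow> (\<forall>b\<in>B. b \<le> s) \<and> (\<forall>x. (\<forall>b\<in>B. b \<le> x) \<longrightarrow> s \<le> x)"

definition card_less :: "'a set \<Rightarrow> enat \<Rightarrow> bool" where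
  "card_less A \<kappa> \<longleftrightarrow> finite A \<and> enat (card A) < \<kappa>"

text \<open>One round: for every move of \<forall>, \<exists> has a legal response leading to a
  position satisfying Q.\<close>
definition round_ok :: "enat \<Rightarrow> enat \<Rightarrow> ('a::order set \<Rightarrow> bool) \<Rightarrow> 'a set \<Rightarrow> bool" where
  "round_ok \<alpha> \<beta> Q U \<longleftrightarrow>
     (\<forall>b. (\<exists>a\<in>U. a \<le> b) \<longrightarrow> Q (insert b U)) \<and>
     (\<forall>A m. A \<subseteq> U \<and> card_less A \<alpha> \<and> is_meet A m \<longrightarrow> Q (insert m U)) \<and>
     (\<forall>B s. card_less B \<beta> \<and> is_join B s \<and> s \<in> U \<longrightarrow> (\<exists>b\<in>B. Q (insert b U)))"

text \<open>n_strategy n alpha beta U V: \<exists> has an n-strategy in the (alpha,beta)-game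
  with starting position (U,V), i.e. U \<inter> V = {} at the beginning of rounds 0..n.\<close>
fun n_strategy :: "nat \<Rightarrow> enat \<Rightarrow> enat \<Rightarrow> 'a::order set \<Rightarrow> 'a set \<Rightarrow> bool" where
  "n_strategy 0 \<alpha> \<beta> U V \<longleftrightarrow> U \<inter> V = {}"
| "n_strategy (Suc n) \<alpha> \<beta> U V \<longleftrightarrow>
     U \<inter> V = {} \<and> round_ok \<alpha> \<beta> (\<lambda>U'. n_strategy n \<alpha> \<beta> U' V) U"

text \<open>omega_strategy alpha beta U V: \<exists> has an omega-strategy, i.e. she can guarantee
  that \<forall> never wins.  Rendered as: there is a set W of positions containing U such that
  every position in W is disjoint from V and every move of \<forall> at it has a response
  leading back into W (the positions reachable under a winning strategy form such a W;
  conversely such a W yields a positional winning strategy).\<close>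
definition omega_strategy :: "enat \<Rightarrow> enat \<Rightarrow> 'a::order set \<Rightarrow> 'a set \<Rightarrow> bool" where
  "omega_strategy \<alpha> \<beta> U V \<longleftrightarrow>
     (\<exists>W. U \<in> W \<and> (\<forall>X\<in>W. X \<inter> V = {} \<and> round_ok \<alpha> \<beta> (\<lambda>Y. Y \<in> W) X))"

end

theory Submission
  imports Defs
begin

lemma round_ok_mono:
  assumes "round_ok al be Q U" "\<And>X. Q X \<Longrightarrow> R X"
  shows "round_ok al be R U"
  using assms unfolding round_ok_def by (metis (no_types, lifting))

lemma omega_to_n:
  assumes "omega_strategy al be U V"
  shows "n_strategy n al be U V"
proof -
  obtain W where W: "U \<in> W" "\<forall>X\<in>W. X \<inter> V = {} \<and> round_ok al be (\<lambda>Y. Y \<in> W) X"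
    using assms unfolding omega_strategy_def by (metis (no_types, lifting))
  have "\<forall>X\<in>W. n_strategy n al be X V"
  proof (induction n)
    case 0 show ?case using W(2) by simp
  next
    case (Suc n)
    show ?case
    proof
      fix X assume "X \<in> W"
      then have "X \<inter> V = {}" "round_ok al be (\<lambda>Y. Y \<in> W) X" using W(2) by auto
      moreover have "round_ok al be (\<lambda>Y. n_strategy n al be Y V) X"
        apply (rule round_ok_mono[OF \<open>round_ok al be (\<lambda>Y. Y \<in> W) X\<close>])
        using Suc.IH by simp
      ultimately show "n_strategy (Suc n) al be X V" by simp
    qed
  qed
  then show ?thesis using W(1) by simp
qed

lemma card2: "card_less {u, v} (3::enat)"
proof -
  have "card {u, v} \<le> 2" by (simp add: card_insert_if)
  then have "enat (card {u,v}) < 3" by (simp add: numeral_eq_enat)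
  then show ?thesis unfolding card_less_def by simp
qed

lemma ns_disj: "n_strategy n al be U V \<Longrightarrow> U \<inter> V = {}"
  by (cases n) auto

lemma ns_round: "n_strategy (Suc n) al be U V \<Longrightarrow> round_ok al be (\<lambda>U'. n_strategy n al be U' V) U"
  by simp

lemma ns_up: assumes "n_strategy (Suc n) al be U V" "u \<in> U" "u \<le> c"
  shows "n_strategy n al be (insert c U) V"
proof -
  have "\<forall>b. (\<exists>a\<in>U. a \<le> b) \<longrightarrow> n_strategy n al be (insert b U) V"
    using ns_round[OF assms(1)] unfolding round_ok_def by (rule conjunct1)
  then show ?thesis using assms(2,3) by blast
qed

lemma ns_meet: assumes "n_strategy (Suc n) al be U V" "A \<subseteq> U" "card_less A al" "is_meet A mm"
  shows "n_strategy n al be (insert mm U) V"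
proof -
  have "\<forall>A m. A \<subseteq> U \<and> card_less A al \<and> is_meet A m \<longrightarrow> n_strategy n al be (insert m U) V"
    using ns_round[OF assms(1)] unfolding round_ok_def by (metis (no_types, lifting))
  then show ?thesis using assms(2,3,4) by blast
qed

lemma ns_join: assumes "n_strategy (Suc n) al be U V" "card_less B be" "is_join B s" "s \<in> U"
  shows "\<exists>y\<in>B. n_strategy n al be (insert y U) V"
proof -
  have "\<forall>B s. card_less B be \<and> is_join B s \<and> s \<in> U \<longrightarrow> (\<exists>b\<in>B. n_strategy n al be (insert b U) V)"
    using ns_round[OF assms(1)] unfolding round_ok_def by (metis (no_types, lifting))
  then show ?thesis using assms(2,3,4) by blast
qed

lemma distrib_Sup_fin:
  fixes c t :: "'a::lattice"
  assumes D: "\<forall>x y z::'a. inf x (sup y z) = sup (inf x y) (inf x z)"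
  shows "finite B \<Longrightarrow> B \<noteq> {} \<Longrightarrow> (\<forall>b\<in>B. inf c b \<le> t) \<Longrightarrow> inf c (Sup_fin B) \<le> t"
proof (induction B rule: finite_ne_induct)
  case (singleton x) then show ?case by simp
next
  case (insert x F)
  then show ?case using D by simp
qed

lemma dist_omega:
  fixes a b :: "'a::lattice"
  assumes D: "\<forall>x y z::'a. inf x (sup y z) = sup (inf x y) (inf x z)"
    and ab: "\<not> a \<le> b"
  shows "omega_strategy m k {a} {b}"
proof -
  define W where "W = {X. finite X \<and> X \<noteq> {} \<and> \<not> Inf_fin X \<le> (b::'a)}"
  have "{a} \<in> W" using ab by (simp add: W_def)
  moreover have "X \<inter> {b} = {} \<and> round_ok m k (\<lambda>Y. Y \<in> W) X" if X: "X \<in> W" for X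
  proof
    have fX: "finite X" "X \<noteq> {}" "\<not> Inf_fin X \<le> b" using X by (auto simp: W_def)
    have cob: "Inf_fin X \<le> x" if "x \<in> X" for x using fX(1) that by (rule Inf_fin.coboundedI)
    show "X \<inter> {b} = {}"
    proof (rule ccontr)
      assume "X \<inter> {b} \<noteq> {}"
      then have "b \<in> X" by simp
      then show False using cob fX(3) by simp
    qed
    have ins: "insert c X \<in> W" if "Inf_fin X \<le> c" for c
    proof -
      have "Inf_fin (insert c X) = inf c (Inf_fin X)" using fX by simp
      also have "\<dots> = Inf_fin X" using that by (simp add: inf_absorb2)
      finally show ?thesis using fX by (simp add: W_def)
    qed
    show "round_ok m k (\<lambda>Y. Y \<in> W) X"
      unfolding round_ok_def
    proof (intro conjI allI impI)
      fix c assume "\<exists>a\<in>X. a \<le> c"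
      then obtain u where "u \<in> X" "u \<le> c" by auto
      then have "Inf_fin X \<le> c" using cob order_trans by metis
      then show "insert c X \<in> W" by (rule ins)
    next
      fix A mm assume h: "A \<subseteq> X \<and> card_less A m \<and> is_meet A mm"
      have "\<forall>u\<in>A. Inf_fin X \<le> u" using h cob by auto
      then have "Inf_fin X \<le> mm" using h unfolding is_meet_def by simp
      then show "insert mm X \<in> W" by (rule ins)
    next
      fix B s assume h: "card_less B k \<and> is_join B s \<and> s \<in> X"
      show "\<exists>y\<in>B. insert y X \<in> W"
      proof (rule ccontr)
        assume nb: "\<not> (\<exists>y\<in>B. insert y X \<in> W)"
        let ?c = "Inf_fin X"
        have cs: "?c \<le> s" using h cob by simp
        have all: "\<forall>y\<in>B. inf ?c y \<le> b"
        proof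
          fix y assume "y \<in> B"
          then have "insert y X \<notin> W" using nb by auto
          then have "Inf_fin (insert y X) \<le> b" using fX by (simp add: W_def)
          then show "inf ?c y \<le> b" using fX by (simp add: inf_commute)
        qed
        show False
        proof (cases "B = {}")
          case True
          then have "s \<le> b" using h unfolding is_join_def by simp
          then show False using cs fX(3) order_trans by metis
        next
          case False
          have fB: "finite B" using h unfolding card_less_def by simp
          have "\<forall>y\<in>B. y \<le> Sup_fin B" using fB Sup_fin.coboundedI by metis
          then have "s \<le> Sup_fin B" using h unfolding is_join_def by simp
          then have "?c \<le> inf ?c (Sup_fin B)" using cs by (simp add: order_trans)
          also have "\<dots> \<le> b" using distrib_Sup_fin[OF D fB False all] .
          finally show False using fX(3) by simp
        qed
      qed
    qed
  qed
  ultimately show ?thesis unfolding omega_strategy_def by blast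
qed

lemma nondist_lose:
  fixes x y z :: "'a::lattice"
  assumes ns: "n_strategy 5 3 3 {inf x (sup y z)} {sup (inf x y) (inf x z)}"
  shows False
proof -
  let ?a = "inf x (sup y z)" and ?b = "sup (inf x y) (inf x z)"
  have n4: "n_strategy 4 3 3 {x, ?a} {?b}"
    using ns_up[of 4 3 3 "{?a}" "{?b}" ?a x] ns by (simp add: numeral_eq_Suc)
  have n3: "n_strategy 3 3 3 {sup y z, x, ?a} {?b}"
    using ns_up[of 3 3 3 "{x, ?a}" "{?b}" ?a "sup y z"] n4 by (simp add: numeral_eq_Suc)
  have j: "is_join {y, z} (sup y z)" unfolding is_join_def by auto
  obtain w where w: "w \<in> {y, z}" and n2: "n_strategy 2 3 3 (insert w {sup y z, x, ?a}) {?b}"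
    using ns_join[OF _ card2 j, of 2 3 "{sup y z, x, ?a}" "{?b}"] n3 by (auto simp: numeral_eq_Suc)
  have mt: "is_meet {x, w} (inf x w)" unfolding is_meet_def by auto
  have n1: "n_strategy 1 3 3 (insert (inf x w) (insert w {sup y z, x, ?a})) {?b}"
    using ns_meet[OF _ _ card2 mt, of 1 3 "insert w {sup y z, x, ?a}" "{?b}"] n2
    by (simp add: numeral_eq_Suc)
  have le: "inf x w \<le> ?b" using w by (auto intro: le_supI1 le_supI2)
  have n0: "n_strategy 0 3 3 (insert ?b (insert (inf x w) (insert w {sup y z, x, ?a}))) {?b}"
    using ns_up[of 0 3 3 "insert (inf x w) (insert w {sup y z, x, ?a})" "{?b}" "inf x w" ?b] n1 le by simp
  then show False by simp
qed

theorem corollary6p3: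
  shows "((\<forall>(a::'a::lattice) b. \<not> a \<le> b \<longrightarrow>
             (\<forall>m k::enat. 3 \<le> m \<longrightarrow> 3 \<le> k \<longrightarrow> omega_strategy m k {a} {b}))
          \<longleftrightarrow> (\<forall>(a::'a) b. \<not> a \<le> b \<longrightarrow> n_strategy 5 3 3 {a} {b}))
       \<and> ((\<forall>(a::'a) b. \<not> a \<le> b \<longrightarrow> n_strategy 5 3 3 {a} {b})
          \<longleftrightarrow> (\<forall>x y z::'a. inf x (sup y z) = sup (inf x y) (inf x z)))"
proof -
  let ?P1 = "\<forall>(a::'a) b. \<not> a \<le> b \<longrightarrow>
             (\<forall>m k::enat. 3 \<le> m \<longrightarrow> 3 \<le> k \<longrightarrow> omega_strategy m k {a} {b})"
  let ?P2 = "\<forall>(a::'a) b. \<not> a \<le> b \<longrightarrow> n_strategy 5 3 3 {a} {b}"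
  let ?P3 = "\<forall>x y z::'a. inf x (sup y z) = sup (inf x y) (inf x z)"
  have 12: "?P1 \<Longrightarrow> ?P2"
  proof (intro allI impI)
    fix a b :: 'a assume "?P1" "\<not> a \<le> b"
    then have "omega_strategy 3 3 {a} {b}" by simp
    then show "n_strategy 5 3 3 {a} {b}" by (rule omega_to_n)
  qed
  have 31: "?P3 \<Longrightarrow> ?P1"
  proof (intro allI impI)
    fix a b :: 'a and m k :: enat assume "?P3" "\<not> a \<le> b"
    then show "omega_strategy m k {a} {b}" by (rule dist_omega)
  qed
  have 23: "?P2 \<Longrightarrow> ?P3"
  proof (intro allI)
    fix x y z :: 'a
    assume P2: ?P2
    have ge: "sup (inf x y) (inf x z) \<le> inf x (sup y z)"
      by (auto intro: le_supI1 le_supI2)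
    show "inf x (sup y z) = sup (inf x y) (inf x z)"
    proof (rule ccontr)
      assume "inf x (sup y z) \<noteq> sup (inf x y) (inf x z)"
      then have "\<not> inf x (sup y z) \<le> sup (inf x y) (inf x z)" using ge by (metis antisym)
      then show False using P2 nondist_lose by blast
    qed
  qed
  show ?thesis using 12 31 23 by blast
qed

end
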